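(* Assume the standing assumptions (A) and let $\mathcal D$ be a Gradient Discretisation with piecewise constant reconstruction. Then there exists a solution $u\in X_{\mathcal D,0}$ to the Gradient Scheme (GS), and if $u_1,u_2\in X_{\mathcal D,0}$ are two solutions of (GS), then $\zeta(u_1)=\zeta(u_2)$ and $\Pi_{\mathcal D}u_1=\Pi_{\mathcal D}u_2$.
   Context: Standing assumptions (A): $\Omega$ is an open bounded connected subset of $\mathbb{R}^d$; $\zeta:\mathbb{R}\to\mathbb{R}$ is continuous, non-decreasing, $\zeta(0)=0$ and there are $M_0,M_1>0$ with $|\zeta(s)|\ge M_0|s|-M_1$ for all $s$; $\beta:\mathbb{R}\to\mathbb{R}$ is continuous, non-decreasing, $\beta(0)=0$ and there are $K_0,K_1>0$ with $|\beta(s)|\le K_0|s|+K_1$ for all $s$; $\beta+\zeta$ is strictly increasing; $\Lambda:\Omega\to M_d(\mathbb{R})$ is measurable and there are $\overline\lambda\ge\underline\lambda>0$ such that for a.e. $x$, $\Lambda(x)$ is symmetric with eigenvalues in $[\underline\lambda,\overline\lambda]$; $f\in L^2(\Omega)$, $F\in L^2(\Omega)^d$. Gradient Discretisation (GD): $\mathcal D=(X_{\mathcal D,0},\Pi_{\mathcal D},\nabla_{\mathcal D},Q_{\mathcal D})$ where $X_{\mathcal D,0}$ is a finite-dimensional space, $\Pi_{\mathcal D}:X_{\mathcal D,0}\to L^2(\Omega)$ and $\nabla_{\mathcal D}:X_{\mathcal D,0}\to L^2(\Omega)^d$ are linear with $\|v\|_{\mathcal D}:=\|\nabla_{\mathcal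 D}v\|_{L^2}$ a norm on $X_{\mathcal D,0}$, and $Q_{\mathcal D}:L^2(\Omega)\to L^2(\Omega)$ is a (not necessarily linear or bounded) map called the quadrature operator. Piecewise constant reconstruction: there are finite sets $I_{\partial\Omega}\subset I$ with $X_{\mathcal D,0}=\{v=(v_i)_{i\in I}: v_i\in\mathbb{R},\ v_i=0\ \forall i\in I_{\partial\Omega}\}$ and a partition $(U_i)_{i\in I}$ of $\Omega$ (some $U_i$ possibly empty) with $\Pi_{\mathcal D}v=\sum_{i\in I}v_i\mathbf 1_{U_i}$. For $g:\mathbb{R}\to\mathbb{R}$ with $g(0)=0$, $g(v):=(g(v_i))_{i\in I}\in X_{\mathcal D,0}$. Gradient Scheme (GS): find $u\in X_{\mathcal D,0}$ such that for all $v\in X_{\mathcal D,0}$, $\int_\Omega\beta(\Pi_{\mathcal D}u)\Pi_{\mathcal D}v+\int_\Omega\Lambda\nabla_{\mathcal D}\zeta(u)\cdot\nabla_{\mathcal D}v=\int_\Omega Q_{\mathcal D}f\,\Pi_{\mathcal D}v-\int_\Omega F\cdot\nabla_{\mathcal D}v$. *)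

theory Defs
  imports "HOL-Analysis.Analysis"
begin

definition L2 :: "(real^'n) set \<Rightarrow> (real^'n \<Rightarrow> 'b::{real_normed_vector, second_countable_topology}) \<Rightarrow> bool" where
  "L2 \<Omega> g \<longleftrightarrow> g \<in> borel_measurable (lebesgue_on \<Omega>) \<and>
     integrable (lebesgue_on \<Omega>) (\<lambda>x. (norm (g x))\<^sup>2)"

definition is_eigenvalue :: "real^'n^'n \<Rightarrow> real \<Rightarrow> bool" where
  "is_eigenvalue A c \<longleftrightarrow> (\<exists>v. v \<noteq> 0 \<and> A *v v = c *\<^sub>R v)"

text \<open>Discrete space X_{D,0}: families indexed by the finite type 'i vanishing on the boundary indices.\<close>
definition XD0 :: "'i set \<Rightarrow> ('i::finite \<Rightarrow> real) set" where
  "XD0 Ib = {v. \<forall>i\<in>Ib. v i = 0}"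

definition PiD :: "('i::finite \<Rightarrow> (real^'n) set) \<Rightarrow> ('i \<Rightarrow> real) \<Rightarrow> real^'n \<Rightarrow> real" where
  "PiD U v x = (\<Sum>i\<in>UNIV. v i * indicator (U i) x)"

definition compw :: "(real \<Rightarrow> real) \<Rightarrow> ('i \<Rightarrow> real) \<Rightarrow> ('i \<Rightarrow> real)" where
  "compw g v = (\<lambda>i. g (v i))"

definition is_GS_solution ::
  "(real^'n) set \<Rightarrow> 'i set \<Rightarrow> ('i::finite \<Rightarrow> (real^'n) set) \<Rightarrow> (('i \<Rightarrow> real) \<Rightarrow> real^'n \<Rightarrow> real^'n)
   \<Rightarrow> (real \<Rightarrow> real) \<Rightarrow> (real \<Rightarrow> real) \<Rightarrow> (real^'n \<Rightarrow> real^'n^'n)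
   \<Rightarrow> (real^'n \<Rightarrow> real) \<Rightarrow> (real^'n \<Rightarrow> real^'n) \<Rightarrow> ('i \<Rightarrow> real) \<Rightarrow> bool" where
  "is_GS_solution \<Omega> Ib U gradD \<beta> \<zeta> \<Lambda> Qf F u \<longleftrightarrow> u \<in> XD0 Ib \<and>
     (\<forall>v\<in>XD0 Ib.
        integral\<^sup>L (lebesgue_on \<Omega>) (\<lambda>x. \<beta> (PiD U u x) * PiD U v x)
      + integral\<^sup>L (lebesgue_on \<Omega>) (\<lambda>x. (\<Lambda> x *v gradD (compw \<zeta> u) x) \<bullet> gradD v x)
      = integral\<^sup>L (lebesgue_on \<Omega>) (\<lambda>x. Qf x * PiD U v x)
      - integral\<^sup>L (lebesgue_on \<Omega>) (\<lambda>x. F x \<bullet> gradD v x))"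

end

theory Submission
  imports Defs
begin
lemma acute_zero:
  fixes G :: "'a::euclidean_space \<Rightarrow> 'a"
  assumes R: "R > 0" and cont: "continuous_on (cball 0 R) G"
    and pos: "\<And>y. norm y = R \<Longrightarrow> G y \<bullet> y > 0"
  shows "\<exists>y\<in>cball 0 R. G y = 0"
proof -
  define f where "f y = (R / max R (norm (y - G y))) *\<^sub>R (y - G y)" for y
  have contf: "continuous_on (cball 0 R) f"
    unfolding f_def using R by (intro continuous_intros cont) auto
  have fim: "f \<in> cball 0 R \<rightarrow> cball 0 R"
  proof
    fix y :: 'a assume "y \<in> cball 0 R"
    have "norm (f y) = R / max R (norm (y - G y)) * norm (y - G y)"
      using R by (simp add: f_def)
    also have "\<dots> \<le> R" using R by (auto simp: field_simps max_def)
    finally show "f y \<in> cball 0 R" by simp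
  qed
  obtain y where y: "y \<in> cball 0 R" "f y = y" using brouwer_ball[OF R contf fim] by blast
  define c where "c = R / max R (norm (y - G y))"
  have c: "c > 0" "c \<le> 1" using R by (auto simp: c_def field_simps)
  have eq: "y = c *\<^sub>R (y - G y)" using y(2) by (simp add: f_def c_def)
  show ?thesis
  proof (cases "c = 1")
    case True then show ?thesis using eq y(1) by (auto simp: algebra_simps)
  next
    case False
    then have gt: "norm (y - G y) > R" using R by (auto simp: c_def max_def split: if_splits)
    have ny: "norm y = R"
    proof -
      have "norm y = c * norm (y - G y)" using c by (subst eq) simp
      also have "\<dots> = R" using gt R by (cases "y = G y") (auto simp: c_def)
      finally show ?thesis .
    qed
    have "c *\<^sub>R G y = (c - 1) *\<^sub>R y" using eq by (simp add: algebra_simps)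
    then have "c * (G y \<bullet> y) = (c - 1) * (y \<bullet> y)" by (metis inner_scaleR_left)
    moreover have "y \<bullet> y > 0" using ny R by (metis inner_gt_zero_iff norm_zero order_less_irrefl)
    moreover have "c < 1" using c False by simp
    ultimately have "c * (G y \<bullet> y) < 0" by (simp add: mult_neg_pos)
    moreover have "c * (G y \<bullet> y) > 0" using pos[OF ny] c by simp
    ultimately have False by linarith
    then show ?thesis ..
  qed
qed

lemma psd_null:
  fixes b :: "'a::euclidean_space \<Rightarrow> 'a"
  assumes lin: "linear b" and sym: "\<And>x y. b x \<bullet> y = x \<bullet> b y"
    and psd: "\<And>x. b x \<bullet> x \<ge> 0" and z: "b x0 \<bullet> x0 = 0"
  shows "b x0 = 0"
proof (rule ccontr)
  assume ne: "b x0 \<noteq> 0"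
  define y where "y = b x0"
  define a where "a = y \<bullet> y"
  have a: "a > 0" using ne by (simp add: a_def y_def)
  define B where "B = b y \<bullet> y"
  have B: "B \<ge> 0" using psd by (simp add: B_def)
  define s where "s = a / (B + 1)"
  have s: "s > 0" "s * B < a" using a B by (auto simp: s_def field_simps)
  have "0 \<le> b (x0 - s *\<^sub>R y) \<bullet> (x0 - s *\<^sub>R y)" by (rule psd)
  also have "b (x0 - s *\<^sub>R y) = b x0 - s *\<^sub>R b y" using lin by (simp add: linear_diff linear_scale)
  also have "(b x0 - s *\<^sub>R b y) \<bullet> (x0 - s *\<^sub>R y) = b x0 \<bullet> x0 - s * (b x0 \<bullet> y) - s * (b y \<bullet> x0) + s * s * (b y \<bullet> y)"
    by (simp add: inner_diff_left inner_diff_right right_diff_distrib)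
  also have "b y \<bullet> x0 = a" using sym[of y x0] by (simp add: a_def y_def inner_commute)
  finally have "0 \<le> - 2 * s * a + s * (s * B)" using z by (simp add: a_def B_def y_def algebra_simps)
  moreover have "s * (s * B) < s * a" using s by simp
  moreover have "s * a > 0" using s a by simp
  ultimately show False by linarith
qed

lemma psd_cs:
  fixes b :: "'a::euclidean_space \<Rightarrow> 'a"
  assumes lin: "linear b" and sym: "\<And>x y. b x \<bullet> y = x \<bullet> b y"
    and psd: "\<And>x. b x \<bullet> x \<ge> 0"
  shows "(b x \<bullet> y)\<^sup>2 \<le> (b x \<bullet> x) * (b y \<bullet> y)"
proof -
  define p where "p = b x \<bullet> x"
  define r where "r = b x \<bullet> y"
  define s where "s = b y \<bullet> y"
  have q: "0 \<le> p + 2 * t * r + t * t * s" for t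
  proof -
    have "0 \<le> b (x + t *\<^sub>R y) \<bullet> (x + t *\<^sub>R y)" by (rule psd)
    also have "b (x + t *\<^sub>R y) = b x + t *\<^sub>R b y" using lin by (simp add: linear_add linear_scale)
    also have "(b x + t *\<^sub>R b y) \<bullet> (x + t *\<^sub>R y) = p + t * r + t * (b y \<bullet> x) + t * t * s"
      by (simp add: p_def r_def s_def inner_add_left inner_add_right distrib_left)
    also have "b y \<bullet> x = r" using sym[of y x] by (simp add: r_def inner_commute)
    finally show ?thesis by (simp add: algebra_simps)
  qed
  have s0: "s \<ge> 0" using psd by (simp add: s_def)
  show ?thesis
  proof (cases "s = 0")
    case True
    show ?thesis
    proof (cases "r = 0")
      case False
      have "0 \<le> p + 2 * (-(p+1)/(2*r)) * r" using q[of "-(p+1)/(2*r)"] True by simp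
      also have "\<dots> = -1" using False by (simp add: field_simps)
      finally show ?thesis by simp
    qed (simp add: r_def[symmetric] p_def[symmetric] s_def[symmetric] True)
  next
    case False
    then have sp: "s > 0" using s0 by simp
    have "0 \<le> p + 2 * (-r/s) * r + (-r/s) * (-r/s) * s" by (rule q)
    also have "\<dots> = p - r * r / s" using sp by (simp add: field_simps power2_eq_square)
    finally have "r * r \<le> p * s" using sp by (simp add: field_simps)
    then show ?thesis by (simp add: power2_eq_square p_def r_def s_def)
  qed
qed

lemma sym_mat: 
  fixes A :: "real^'n^'n"
  assumes "transpose A = A"
  shows "(A *v x) \<bullet> y = x \<bullet> (A *v y)"
proof -
  have "A *v x = x v* A" using transpose_matrix_vector[of A x] assms by simp
  then show ?thesis by (simp add: dot_lmul_matrix)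
qed

lemma lin_shift: "linear (\<lambda>x. (A::real^'n^'n) *v x - m *\<^sub>R x)" "linear (\<lambda>x. m *\<^sub>R x - (A::real^'n^'n) *v x)"
  by (auto simp: linear_iff algebra_simps)

lemma sym_eig:
  fixes A :: "real^'n^'n"
  assumes sym: "transpose A = A"
    and eig: "\<forall>c. is_eigenvalue A c \<longrightarrow> lo \<le> c \<and> c \<le> hi" and lo: "lo > 0"
  shows "lo * (x \<bullet> x) \<le> (A *v x) \<bullet> x" "norm (A *v x) \<le> hi * norm x"
proof -
  have S: "compact (sphere (0::real^'n) 1)" "sphere (0::real^'n) 1 \<noteq> {}"
    using vector_choose_size[of 1] by auto
  have cq: "continuous_on (sphere 0 1) (\<lambda>x. (A *v x) \<bullet> x)"
    by (intro continuous_intros)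
  obtain x0 where x0: "x0 \<in> sphere 0 1" "\<And>y. y \<in> sphere 0 1 \<Longrightarrow> (A *v x0) \<bullet> x0 \<le> (A *v y) \<bullet> y"
    using continuous_attains_inf[OF S cq] by blast
  obtain x1 where x1: "x1 \<in> sphere 0 1" "\<And>y. y \<in> sphere 0 1 \<Longrightarrow> (A *v y) \<bullet> y \<le> (A *v x1) \<bullet> x1"
    using continuous_attains_sup[OF S cq] by blast
  define m where "m = (A *v x0) \<bullet> x0"
  define M where "M = (A *v x1) \<bullet> x1"
  have hom: "(A *v x) \<bullet> x = (x \<bullet> x) * ((A *v (x /\<^sub>R norm x)) \<bullet> (x /\<^sub>R norm x))" if "x \<noteq> 0" for x
    using that by (simp add: matrix_vector_mult_scaleR power2_norm_eq_inner[symmetric] field_simps power2_eq_square)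
  have low: "m * (x \<bullet> x) \<le> (A *v x) \<bullet> x" for x
  proof (cases "x = 0")
    case False
    have "m \<le> (A *v (x /\<^sub>R norm x)) \<bullet> (x /\<^sub>R norm x)" unfolding m_def using False by (intro x0(2)) simp
    then have "m * (x \<bullet> x) \<le> (A *v (x /\<^sub>R norm x)) \<bullet> (x /\<^sub>R norm x) * (x \<bullet> x)"
      by (rule mult_right_mono[OF _ inner_ge_zero])
    then show ?thesis using hom[OF False] by (metis mult.commute)
  qed simp
  have up: "(A *v x) \<bullet> x \<le> M * (x \<bullet> x)" for x
  proof (cases "x = 0")
    case False
    have "(A *v (x /\<^sub>R norm x)) \<bullet> (x /\<^sub>R norm x) \<le> M" unfolding M_def using False by (intro x1(2)) simp
    then have "(A *v (x /\<^sub>R norm x)) \<bullet> (x /\<^sub>R norm x) * (x \<bullet> x) \<le> M * (x \<bullet> x)"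
      by (rule mult_right_mono[OF _ inner_ge_zero])
    then show ?thesis using hom[OF False] by (metis mult.commute)
  qed simp
  have "(\<lambda>x. A *v x - m *\<^sub>R x) x0 = 0"
  proof (rule psd_null[OF lin_shift(1)])
    show "(A *v x - m *\<^sub>R x) \<bullet> y = x \<bullet> (A *v y - m *\<^sub>R y)" for x y
      by (simp add: inner_diff_left inner_diff_right sym_mat[OF sym])
    show "0 \<le> (A *v x - m *\<^sub>R x) \<bullet> x" for x using low[of x] by (simp add: inner_diff_left)
    show "(A *v x0 - m *\<^sub>R x0) \<bullet> x0 = 0" using x0(1) by (simp add: inner_diff_left m_def dot_square_norm)
  qed
  then have "is_eigenvalue A m" using x0(1) unfolding is_eigenvalue_def by (intro exI[of _ x0]) auto
  then have "lo \<le> m" using eig by blast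
  then show l: "lo * (x \<bullet> x) \<le> (A *v x) \<bullet> x" using low[of x] mult_right_mono[OF \<open>lo \<le> m\<close> inner_ge_zero[of x]] by linarith
  have "(\<lambda>x. M *\<^sub>R x - A *v x) x1 = 0"
  proof (rule psd_null[OF lin_shift(2)])
    show "(M *\<^sub>R x - A *v x) \<bullet> y = x \<bullet> (M *\<^sub>R y - A *v y)" for x y
      by (simp add: inner_diff_left inner_diff_right sym_mat[OF sym])
    show "0 \<le> (M *\<^sub>R x - A *v x) \<bullet> x" for x using up[of x] by (simp add: inner_diff_left)
    show "(M *\<^sub>R x1 - A *v x1) \<bullet> x1 = 0" using x1(1) by (simp add: inner_diff_left M_def dot_square_norm)
  qed
  then have "is_eigenvalue A M" using x1(1) unfolding is_eigenvalue_def by (intro exI[of _ x1]) auto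
  then have Mh: "M \<le> hi" using eig by blast
  have hi0: "hi > 0" using x0(2)[OF x1(1)] Mh lo \<open>lo \<le> m\<close> unfolding m_def M_def by linarith
  have up2: "(A *v z) \<bullet> z \<le> hi * (z \<bullet> z)" for z using up[of z] mult_right_mono[OF Mh inner_ge_zero[of z]] by linarith
  have psd: "0 \<le> (A *v z) \<bullet> z" for z using low[of z] \<open>lo \<le> m\<close> lo
  proof -
    have "0 \<le> m * (z \<bullet> z)" using \<open>lo \<le> m\<close> lo by (intro mult_nonneg_nonneg) auto
    then show ?thesis using low[of z] by linarith
  qed
  define y where "y = A *v x"
  have "((A *v x) \<bullet> y)\<^sup>2 \<le> ((A *v x) \<bullet> x) * ((A *v y) \<bullet> y)"
    by (rule psd_cs[where b="\<lambda>x. A *v x"]) (simp, rule sym_mat[OF sym], rule psd)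
  also have "\<dots> \<le> (hi * (x \<bullet> x)) * (hi * (y \<bullet> y))"
    by (intro mult_mono up2 psd) (use hi0 in \<open>auto intro!: mult_nonneg_nonneg\<close>)
  finally have "(norm y ^ 2)^2 \<le> (hi * norm x)^2 * norm y ^ 2"
    by (simp add: y_def power2_norm_eq_inner[symmetric] power_mult_distrib algebra_simps power2_eq_square)
  then have "norm y ^ 2 \<le> (hi * norm x)^2"
    by (cases "norm y = 0") (auto simp: power2_eq_square)
  then show "norm (A *v x) \<le> hi * norm x" unfolding y_def
    by (rule power2_le_imp_le) (use hi0 in auto)
qed

lemma L2_mult:
  fixes f g :: "real^'n \<Rightarrow> real"
  assumes "L2 \<Omega> f" "L2 \<Omega> g"
  shows "integrable (lebesgue_on \<Omega>) (\<lambda>x. f x * g x)"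
proof (rule Bochner_Integration.integrable_bound[where f="\<lambda>x. (f x)\<^sup>2 + (g x)\<^sup>2"])
  show "integrable (lebesgue_on \<Omega>) (\<lambda>x. (f x)\<^sup>2 + (g x)\<^sup>2)"
    using assms unfolding L2_def by simp
  show "(\<lambda>x. f x * g x) \<in> borel_measurable (lebesgue_on \<Omega>)"
    using assms unfolding L2_def by (intro borel_measurable_times) auto
  show "AE x in lebesgue_on \<Omega>. norm (f x * g x) \<le> norm ((f x)\<^sup>2 + (g x)\<^sup>2)"
  proof (rule AE_I2)
    fix x
    have "0 \<le> (\<bar>f x\<bar> - \<bar>g x\<bar>)\<^sup>2" by simp
    then have "2 * (\<bar>f x\<bar> * \<bar>g x\<bar>) \<le> \<bar>f x\<bar>\<^sup>2 + \<bar>g x\<bar>\<^sup>2"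
      by (simp add: power2_eq_square algebra_simps)
    moreover have "0 \<le> \<bar>f x\<bar> * \<bar>g x\<bar>" by simp
    moreover have "norm (f x * g x) = \<bar>f x\<bar> * \<bar>g x\<bar>" by (simp add: abs_mult)
    moreover have "norm ((f x)\<^sup>2 + (g x)\<^sup>2) = \<bar>f x\<bar>\<^sup>2 + \<bar>g x\<bar>\<^sup>2" by simp
    ultimately show "norm (f x * g x) \<le> norm ((f x)\<^sup>2 + (g x)\<^sup>2)"
      by linarith
  qed
qed

lemma L2_inner:
  fixes f g :: "real^'n \<Rightarrow> real^'m"
  assumes "L2 \<Omega> f" "L2 \<Omega> g"
  shows "integrable (lebesgue_on \<Omega>) (\<lambda>x. f x \<bullet> g x)"
proof (rule Bochner_Integration.integrable_bound[where f="\<lambda>x. (norm (f x))\<^sup>2 + (norm (g x))\<^sup>2"])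
  show "integrable (lebesgue_on \<Omega>) (\<lambda>x. (norm (f x))\<^sup>2 + (norm (g x))\<^sup>2)"
    using assms unfolding L2_def by simp
  show "(\<lambda>x. f x \<bullet> g x) \<in> borel_measurable (lebesgue_on \<Omega>)"
    using assms unfolding L2_def by (intro borel_measurable_inner) auto
  show "AE x in lebesgue_on \<Omega>. norm (f x \<bullet> g x) \<le> norm ((norm (f x))\<^sup>2 + (norm (g x))\<^sup>2)"
  proof (rule AE_I2)
    fix x
    have cs: "\<bar>f x \<bullet> g x\<bar> \<le> norm (f x) * norm (g x)" by (rule Cauchy_Schwarz_ineq2)
    have "0 \<le> (norm (f x) - norm (g x))\<^sup>2" by simp
    then show "norm (f x \<bullet> g x) \<le> norm ((norm (f x))\<^sup>2 + (norm (g x))\<^sup>2)"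
      using cs by (simp add: power2_eq_square algebra_simps)
  qed
qed

lemma meas_nth:
  fixes f :: "'a \<Rightarrow> 'b::real_normed_vector^'n"
  assumes "f \<in> borel_measurable M"
  shows "(\<lambda>x. f x $ i) \<in> borel_measurable M"
  using borel_measurable_continuous_on[OF linear_continuous_on[OF bounded_linear_vec_nth] assms] .

lemma meas_vec:
  fixes f :: "'a \<Rightarrow> real^'n"
  assumes "\<And>i. (\<lambda>x. f x $ i) \<in> borel_measurable M"
  shows "f \<in> borel_measurable M"
proof (rule borel_measurable_euclidean_space[THEN iffD2], rule ballI)
  fix b :: "real^'n" assume "b \<in> Basis"
  then obtain i where b: "b = axis i 1" by (auto simp: Basis_vec_def)
  show "(\<lambda>x. f x \<bullet> b) \<in> borel_measurable M" using assms[of i] by (simp add: b inner_axis)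
qed

lemma meas_mv:
  fixes A :: "'a \<Rightarrow> real^'n^'m" and g :: "'a \<Rightarrow> real^'n"
  assumes "A \<in> borel_measurable M" "g \<in> borel_measurable M"
  shows "(\<lambda>x. A x *v g x) \<in> borel_measurable M"
proof (rule meas_vec)
  fix i
  have "(\<lambda>x. \<Sum>j\<in>UNIV. A x $ i $ j * g x $ j) \<in> borel_measurable M"
    by (intro borel_measurable_sum borel_measurable_times meas_nth assms)
  then show "(\<lambda>x. (A x *v g x) $ i) \<in> borel_measurable M"
    by (simp add: matrix_vector_mult_def)
qed

lemma lin_int:
  fixes f :: "'a \<Rightarrow> real" and g :: "'k \<Rightarrow> 'a \<Rightarrow> real"
  assumes "finite K" "f \<in> borel_measurable N" "AE x in N. f x = (\<Sum>k\<in>K. c k * g k x)"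
    "\<And>k. k \<in> K \<Longrightarrow> integrable N (g k)"
  shows "integral\<^sup>L N f = (\<Sum>k\<in>K. c k * integral\<^sup>L N (g k))"
proof -
  have int: "integrable N (\<lambda>x. \<Sum>k\<in>K. c k * g k x)" using assms(4) by auto
  have "integral\<^sup>L N f = integral\<^sup>L N (\<lambda>x. \<Sum>k\<in>K. c k * g k x)"
    by (rule integral_cong_AE[OF assms(2) borel_measurable_integrable[OF int] assms(3)])
  also have "\<dots> = (\<Sum>k\<in>K. integral\<^sup>L N (\<lambda>x. c k * g k x))"
    by (rule Bochner_Integration.integral_sum) (use assms(4) in auto)
  also have "\<dots> = (\<Sum>k\<in>K. c k * integral\<^sup>L N (g k))" by simp
  finally show ?thesis .
qed

locale gsl =
  fixes \<Omega> :: "(real^'n) set" and \<zeta> \<beta> :: "real \<Rightarrow> real" and M0 M1 lo hi :: real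
    and \<Lambda> :: "real^'n \<Rightarrow> real^'n^'n" and Qf :: "real^'n \<Rightarrow> real" and F :: "real^'n \<Rightarrow> real^'n"
    and Ib :: "'i::finite set" and U :: "'i \<Rightarrow> (real^'n) set"
    and gradD :: "('i \<Rightarrow> real) \<Rightarrow> real^'n \<Rightarrow> real^'n"
  assumes \<Omega>_open: "open \<Omega>" and \<Omega>_bounded: "bounded \<Omega>"
    and \<zeta>_cont: "continuous_on UNIV \<zeta>" and \<zeta>_mono: "mono \<zeta>" and \<zeta>0: "\<zeta> 0 = 0"
    and M0: "M0 > 0" and \<zeta>_growth: "\<And>s. \<bar>\<zeta> s\<bar> \<ge> M0 * \<bar>s\<bar> - M1"
    and \<beta>_cont: "continuous_on UNIV \<beta>" and \<beta>_mono: "mono \<beta>" and \<beta>0: "\<beta> 0 = 0"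
    and \<beta>\<zeta>_strict: "strict_mono (\<lambda>s. \<beta> s + \<zeta> s)"
    and \<Lambda>_meas: "\<Lambda> \<in> borel_measurable (lebesgue_on \<Omega>)"
    and lo: "lo > 0"
    and \<Lambda>_sym: "AE x in lebesgue_on \<Omega>. transpose (\<Lambda> x) = \<Lambda> x"
    and \<Lambda>_eig: "AE x in lebesgue_on \<Omega>. \<forall>c. is_eigenvalue (\<Lambda> x) c \<longrightarrow> lo \<le> c \<and> c \<le> hi"
    and Qf_L2: "L2 \<Omega> Qf" and F_L2: "L2 \<Omega> F"
    and U_disj: "\<And>i j. i \<noteq> j \<Longrightarrow> U i \<inter> U j = {}"
    and U_cover: "(\<Union>i. U i) = \<Omega>"
    and Pi_L2: "\<And>v. v \<in> XD0 Ib \<Longrightarrow> L2 \<Omega> (PiD U v)"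
    and grad_L2: "\<And>v. v \<in> XD0 Ib \<Longrightarrow> L2 \<Omega> (gradD v)"
    and grad_lin: "\<And>a b v w. v \<in> XD0 Ib \<Longrightarrow> w \<in> XD0 Ib \<Longrightarrow>
        AE x in lebesgue_on \<Omega>. gradD (\<lambda>i. a * v i + b * w i) x = a *\<^sub>R gradD v x + b *\<^sub>R gradD w x"
    and grad_norm: "\<And>v. v \<in> XD0 Ib \<Longrightarrow>
        integral\<^sup>L (lebesgue_on \<Omega>) (\<lambda>x. (norm (gradD v x))\<^sup>2) = 0 \<Longrightarrow> v = (\<lambda>i. 0)"
begin

abbreviation "M \<equiv> lebesgue_on \<Omega>"
abbreviation "J \<equiv> UNIV - Ib"

definition e :: "'i \<Rightarrow> 'i \<Rightarrow> real" where "e i = (\<lambda>j. if j = i then 1 else 0)"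

lemma e_XD0: "i \<in> J \<Longrightarrow> e i \<in> XD0 Ib" by (auto simp: e_def XD0_def)

lemma compw_XD0: "u \<in> XD0 Ib \<Longrightarrow> compw \<zeta> u \<in> XD0 Ib"
  by (auto simp: compw_def XD0_def \<zeta>0)

lemma Pi_e: 
  assumes x: "x \<in> U k" shows "PiD U v x = v k"
proof -
  have "PiD U v x = (\<Sum>i\<in>UNIV. if i = k then v k else 0)"
    unfolding PiD_def by (rule sum.cong) (use x U_disj in \<open>auto simp: indicator_def\<close>)
  then show ?thesis by simp
qed

lemma Pi_e_ind: "PiD U (e i) x = indicator (U i) x"
proof -
  have "(\<lambda>j. e i j * indicator (U j) x) = (\<lambda>j. if j = i then indicator (U i) x else 0)"
    by (auto simp: e_def)
  then show ?thesis unfolding PiD_def by (simp only:) simp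
qed

lemma PiD_lin:
  assumes v: "v \<in> XD0 Ib" shows "PiD U v x = (\<Sum>i\<in>J. v i * PiD U (e i) x)"
proof -
  have "PiD U v x = (\<Sum>i\<in>UNIV. v i * indicator (U i) x)" by (simp add: PiD_def)
  also have "\<dots> = (\<Sum>i\<in>J. v i * indicator (U i) x)"
    by (rule sum.mono_neutral_right) (use v in \<open>auto simp: XD0_def\<close>)
  finally show ?thesis by (simp add: Pi_e_ind)
qed

lemma \<Omega>_lmeas: "\<Omega> \<in> lmeasurable" using lmeasurable_open \<Omega>_bounded \<Omega>_open by blast

lemma finM: "finite_measure M" by (rule finite_measure_lebesgue_on[OF \<Omega>_lmeas])

lemma ind_int: "i \<in> J \<Longrightarrow> integrable M (\<lambda>x. PiD U (e i) x)"
proof -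
  assume i: "i \<in> J"
  have "integrable M (\<lambda>x. (norm (PiD U (e i) x))\<^sup>2)" using Pi_L2[OF e_XD0[OF i]] by (simp add: L2_def)
  moreover have "(norm (PiD U (e i) x))\<^sup>2 = PiD U (e i) x" for x by (simp add: Pi_e_ind indicator_def)
  ultimately show ?thesis by simp
qed

lemma \<Lambda>_coer: "AE x in M. \<forall>w. lo * (w \<bullet> w) \<le> (\<Lambda> x *v w) \<bullet> w"
  using \<Lambda>_sym \<Lambda>_eig by eventually_elim (use lo in \<open>auto intro: sym_eig(1)\<close>)

lemma \<Lambda>_bd: "AE x in M. \<forall>w. norm (\<Lambda> x *v w) \<le> hi * norm w"
  using \<Lambda>_sym \<Lambda>_eig by eventually_elim (use lo in \<open>auto intro: sym_eig(2)\<close>)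

lemma L2_\<Lambda>:
  assumes g: "L2 \<Omega> g" shows "L2 \<Omega> (\<lambda>x. \<Lambda> x *v g x)"
proof -
  have mg: "g \<in> borel_measurable M" "integrable M (\<lambda>x. (norm (g x))\<^sup>2)" using g by (auto simp: L2_def)
  have m: "(\<lambda>x. \<Lambda> x *v g x) \<in> borel_measurable M" by (rule meas_mv[OF \<Lambda>_meas mg(1)])
  have "integrable M (\<lambda>x. (norm (\<Lambda> x *v g x))\<^sup>2)"
  proof (rule Bochner_Integration.integrable_bound[where f="\<lambda>x. hi\<^sup>2 * (norm (g x))\<^sup>2"])
    show "integrable M (\<lambda>x. hi\<^sup>2 * (norm (g x))\<^sup>2)" using mg(2) by simp
    show "(\<lambda>x. (norm (\<Lambda> x *v g x))\<^sup>2) \<in> borel_measurable M"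
      using borel_measurable_continuous_on[of "\<lambda>z::real^'n. (norm z)\<^sup>2", OF _ m]
      by (simp add: continuous_on_power continuous_on_norm_id)
    show "AE x in M. norm ((norm (\<Lambda> x *v g x))\<^sup>2) \<le> norm (hi\<^sup>2 * (norm (g x))\<^sup>2)"
      using \<Lambda>_bd
    proof eventually_elim
      case (elim x)
      then have "norm (\<Lambda> x *v g x) \<le> hi * norm (g x)" by blast
      then have "(norm (\<Lambda> x *v g x))\<^sup>2 \<le> (hi * norm (g x))\<^sup>2"
        by (intro power_mono) auto
      then show ?case by (simp add: power_mult_distrib)
    qed
  qed
  then show ?thesis using m by (simp add: L2_def)
qed

lemma grad_zero: "AE x in M. gradD (\<lambda>i. 0) x = 0"
  using grad_lin[of "\<lambda>i. 0" "\<lambda>i. 0" 0 0] by (simp add: XD0_def)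

lemma grad_sum_gen:
  assumes "finite S" "S \<subseteq> J"
  shows "AE x in M. gradD (\<lambda>j. \<Sum>i\<in>S. c i * e i j) x = (\<Sum>i\<in>S. c i *\<^sub>R gradD (e i) x)"
  using assms
proof (induction S rule: finite_induct)
  case empty
  then show ?case using grad_zero by simp
next
  case (insert k S)
  define w where "w = (\<lambda>j. \<Sum>i\<in>S. c i * e i j)"
  have wX: "w \<in> XD0 Ib" using insert.prems by (auto simp: w_def XD0_def e_def intro!: sum.neutral)
  have kJ: "k \<in> J" using insert.prems by auto
  have eq: "(\<lambda>j. \<Sum>i\<in>insert k S. c i * e i j) = (\<lambda>j. 1 * w j + c k * e k j)"
    using insert.hyps by (auto simp: w_def)
  show ?case
    using grad_lin[OF wX e_XD0[OF kJ], of 1 "c k"] insert.IH[OF subset_trans[OF subset_insertI insert.prems]]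
    unfolding eq
  proof eventually_elim
    case (elim x)
    then show ?case using insert.hyps by (simp add: w_def)
  qed
qed

lemma grad_lin_XD:
  assumes v: "v \<in> XD0 Ib"
  shows "AE x in M. gradD v x = (\<Sum>i\<in>J. v i *\<^sub>R gradD (e i) x)"
proof -
  have "v = (\<lambda>j. \<Sum>i\<in>J. v i * e i j)"
  proof
    fix j
    show "v j = (\<Sum>i\<in>J. v i * e i j)"
    proof (cases "j \<in> Ib")
      case True
      have "(\<Sum>i\<in>J. v i * e i j) = 0" by (rule sum.neutral) (use True in \<open>auto simp: e_def\<close>)
      then show ?thesis using v True by (simp add: XD0_def)
    next
      case False
      then show ?thesis by (simp add: e_def if_distrib cong: if_cong)
    qed
  qed
  then show ?thesis using grad_sum_gen[of J v] by simp
qed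

end

lemma mv_sum: "(A::real^'n^'m) *v (\<Sum>i\<in>S. g i) = (\<Sum>i\<in>S. A *v g i)"
  by (induction S rule: infinite_finite_induct) (auto simp: matrix_vector_right_distrib)

context gsl begin

lemma Pi_meas: "u \<in> XD0 Ib \<Longrightarrow> PiD U u \<in> borel_measurable M"
  using Pi_L2 by (simp add: L2_def)

lemma grad_meas: "u \<in> XD0 Ib \<Longrightarrow> gradD u \<in> borel_measurable M"
  using grad_L2 by (simp add: L2_def)

definition Res :: "('i \<Rightarrow> real) \<Rightarrow> ('i \<Rightarrow> real) \<Rightarrow> real" where
  "Res u v = integral\<^sup>L M (\<lambda>x. \<beta> (PiD U u x) * PiD U v x)
      + integral\<^sup>L M (\<lambda>x. (\<Lambda> x *v gradD (compw \<zeta> u) x) \<bullet> gradD v x)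
      - (integral\<^sup>L M (\<lambda>x. Qf x * PiD U v x) - integral\<^sup>L M (\<lambda>x. F x \<bullet> gradD v x))"

lemma GS_iff: "is_GS_solution \<Omega> Ib U gradD \<beta> \<zeta> \<Lambda> Qf F u \<longleftrightarrow> u \<in> XD0 Ib \<and> (\<forall>v\<in>XD0 Ib. Res u v = 0)"
  by (simp add: is_GS_solution_def Res_def)

definition mm :: "'i \<Rightarrow> real" where "mm i = integral\<^sup>L M (\<lambda>x. PiD U (e i) x)"
definition AA :: "'i \<Rightarrow> 'i \<Rightarrow> real" where
  "AA j i = integral\<^sup>L M (\<lambda>x. (\<Lambda> x *v gradD (e j) x) \<bullet> gradD (e i) x)"
definition bb :: "'i \<Rightarrow> real" where
  "bb i = integral\<^sup>L M (\<lambda>x. Qf x * PiD U (e i) x) - integral\<^sup>L M (\<lambda>x. F x \<bullet> gradD (e i) x)"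

lemma mm_nonneg: "mm i \<ge> 0"
  unfolding mm_def by (rule integral_nonneg_AE) (simp add: Pi_e_ind)

lemma beta_Pi_eq: "(\<lambda>x. \<beta> (PiD U u x) * PiD U (e i) x) = (\<lambda>x. \<beta> (u i) * PiD U (e i) x)"
  by (auto simp: Pi_e_ind Pi_e indicator_def)

lemma I1_lin:
  assumes u: "u \<in> XD0 Ib" and v: "v \<in> XD0 Ib"
  shows "integral\<^sup>L M (\<lambda>x. \<beta> (PiD U u x) * PiD U v x) = (\<Sum>i\<in>J. v i * integral\<^sup>L M (\<lambda>x. \<beta> (PiD U u x) * PiD U (e i) x))"
proof (rule lin_int)
  show "(\<lambda>x. \<beta> (PiD U u x) * PiD U v x) \<in> borel_measurable M"
    by (intro borel_measurable_times borel_measurable_continuous_on[OF \<beta>_cont] Pi_meas u v)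
  show "AE x in M. \<beta> (PiD U u x) * PiD U v x = (\<Sum>i\<in>J. v i * (\<beta> (PiD U u x) * PiD U (e i) x))"
    by (rule AE_I2) (simp add: PiD_lin[OF v] sum_distrib_left algebra_simps)
  show "integrable M (\<lambda>x. \<beta> (PiD U u x) * PiD U (e i) x)" if "i \<in> J" for i
    unfolding beta_Pi_eq using ind_int[OF that] by simp
qed simp

lemma I1_e:
  shows "integral\<^sup>L M (\<lambda>x. \<beta> (PiD U u x) * PiD U (e i) x) = \<beta> (u i) * mm i"
  unfolding beta_Pi_eq mm_def by simp

lemma I2_lin:
  assumes w: "w \<in> XD0 Ib" and v: "v \<in> XD0 Ib"
  shows "integral\<^sup>L M (\<lambda>x. (\<Lambda> x *v gradD w x) \<bullet> gradD v x) = (\<Sum>i\<in>J. v i * integral\<^sup>L M (\<lambda>x. (\<Lambda> x *v gradD w x) \<bullet> gradD (e i) x))"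
proof (rule lin_int)
  show "(\<lambda>x. (\<Lambda> x *v gradD w x) \<bullet> gradD v x) \<in> borel_measurable M"
    by (intro borel_measurable_inner meas_mv \<Lambda>_meas grad_meas w v)
  show "AE x in M. (\<Lambda> x *v gradD w x) \<bullet> gradD v x = (\<Sum>i\<in>J. v i * ((\<Lambda> x *v gradD w x) \<bullet> gradD (e i) x))"
    using grad_lin_XD[OF v] by eventually_elim (simp add: inner_sum_right)
  show "integrable M (\<lambda>x. (\<Lambda> x *v gradD w x) \<bullet> gradD (e i) x)" if "i \<in> J" for i
    by (rule L2_inner[OF L2_\<Lambda>[OF grad_L2[OF w]] grad_L2[OF e_XD0[OF that]]])
qed simp

lemma I3_lin:
  assumes v: "v \<in> XD0 Ib"
  shows "integral\<^sup>L M (\<lambda>x. Qf x * PiD U v x) = (\<Sum>i\<in>J. v i * integral\<^sup>L M (\<lambda>x. Qf x * PiD U (e i) x))"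
proof (rule lin_int)
  show "(\<lambda>x. Qf x * PiD U v x) \<in> borel_measurable M"
    using Qf_L2 by (intro borel_measurable_times Pi_meas v) (simp add: L2_def)
  show "AE x in M. Qf x * PiD U v x = (\<Sum>i\<in>J. v i * (Qf x * PiD U (e i) x))"
    by (rule AE_I2) (simp add: PiD_lin[OF v] sum_distrib_left algebra_simps)
  show "integrable M (\<lambda>x. Qf x * PiD U (e i) x)" if "i \<in> J" for i
    by (rule L2_mult[OF Qf_L2 Pi_L2[OF e_XD0[OF that]]])
qed simp

lemma I4_lin:
  assumes v: "v \<in> XD0 Ib"
  shows "integral\<^sup>L M (\<lambda>x. F x \<bullet> gradD v x) = (\<Sum>i\<in>J. v i * integral\<^sup>L M (\<lambda>x. F x \<bullet> gradD (e i) x))"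
proof (rule lin_int)
  show "(\<lambda>x. F x \<bullet> gradD v x) \<in> borel_measurable M"
    using F_L2 by (intro borel_measurable_inner grad_meas v) (simp add: L2_def)
  show "AE x in M. F x \<bullet> gradD v x = (\<Sum>i\<in>J. v i * (F x \<bullet> gradD (e i) x))"
    using grad_lin_XD[OF v] by eventually_elim (simp add: inner_sum_right)
  show "integrable M (\<lambda>x. F x \<bullet> gradD (e i) x)" if "i \<in> J" for i
    by (rule L2_inner[OF F_L2 grad_L2[OF e_XD0[OF that]]])
qed simp

lemma Res_lin:
  assumes u: "u \<in> XD0 Ib" and v: "v \<in> XD0 Ib"
  shows "Res u v = (\<Sum>i\<in>J. v i * Res u (e i))"
  unfolding Res_def I1_lin[OF u v] I2_lin[OF compw_XD0[OF u] v] I3_lin[OF v] I4_lin[OF v]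
  by (simp add: sum.distrib sum_subtractf algebra_simps)

lemma I2_quad:
  assumes w: "w \<in> XD0 Ib" and z: "z \<in> XD0 Ib"
  shows "integral\<^sup>L M (\<lambda>x. (\<Lambda> x *v gradD w x) \<bullet> gradD z x) = (\<Sum>p\<in>J \<times> J. (w (fst p) * z (snd p)) * AA (fst p) (snd p))"
  unfolding AA_def
proof (rule lin_int)
  show "(\<lambda>x. (\<Lambda> x *v gradD w x) \<bullet> gradD z x) \<in> borel_measurable M"
    by (intro borel_measurable_inner meas_mv \<Lambda>_meas grad_meas w z)
  show "AE x in M. (\<Lambda> x *v gradD w x) \<bullet> gradD z x = (\<Sum>p\<in>J \<times> J. (w (fst p) * z (snd p)) * ((\<lambda>p x. (\<Lambda> x *v gradD (e (fst p)) x) \<bullet> gradD (e (snd p)) x) p x))"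
    using grad_lin_XD[OF w] grad_lin_XD[OF z]
  proof eventually_elim
    case (elim x)
    have "(\<Lambda> x *v gradD w x) \<bullet> gradD z x = (\<Sum>j\<in>J. \<Sum>i\<in>J. (w j * z i) * ((\<Lambda> x *v gradD (e j) x) \<bullet> gradD (e i) x))"
      unfolding elim by (simp add: mv_sum inner_sum_left inner_sum_right sum_distrib_left algebra_simps) (rule sum.swap)
    also have "\<dots> = (\<Sum>p\<in>J \<times> J. (w (fst p) * z (snd p)) * ((\<Lambda> x *v gradD (e (fst p)) x) \<bullet> gradD (e (snd p)) x))"
      by (simp add: sum.cartesian_product case_prod_beta)
    finally show ?case by simp
  qed
  show "integrable M ((\<lambda>p x. (\<Lambda> x *v gradD (e (fst p)) x) \<bullet> gradD (e (snd p)) x) p)" if "p \<in> J \<times> J" for p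
    using that by (auto intro!: L2_inner L2_\<Lambda> grad_L2 e_XD0)
qed simp

lemma Res_e:
  assumes u: "u \<in> XD0 Ib" and i: "i \<in> J"
  shows "Res u (e i) = mm i * \<beta> (u i) + (\<Sum>j\<in>J. AA j i * \<zeta> (u j)) - bb i"
proof -
  have "integral\<^sup>L M (\<lambda>x. (\<Lambda> x *v gradD (compw \<zeta> u) x) \<bullet> gradD (e i) x)
      = (\<Sum>p\<in>J \<times> J. (\<zeta> (u (fst p)) * e i (snd p)) * AA (fst p) (snd p))"
    using I2_quad[OF compw_XD0[OF u] e_XD0[OF i]] by (simp add: compw_def)
  also have "\<dots> = (\<Sum>j\<in>J. \<Sum>k\<in>J. (\<zeta> (u j) * e i k) * AA j k)"
    by (simp add: sum.cartesian_product case_prod_beta)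
  also have "\<dots> = (\<Sum>j\<in>J. AA j i * \<zeta> (u j))"
  proof (rule sum.cong[OF refl])
    fix j
    have eq: "(\<lambda>k. (\<zeta> (u j) * e i k) * AA j k) = (\<lambda>k. if k = i then \<zeta> (u j) * AA j i else 0)"
      by (auto simp: e_def)
    show "(\<Sum>k\<in>J. (\<zeta> (u j) * e i k) * AA j k) = AA j i * \<zeta> (u j)" unfolding eq using i by simp
  qed
  finally show ?thesis unfolding Res_def I1_e bb_def by simp
qed

definition qf :: "('i \<Rightarrow> real) \<Rightarrow> real" where
  "qf z = (\<Sum>j\<in>J. \<Sum>i\<in>J. z j * z i * AA j i)"

lemma qf_int:
  assumes z: "z \<in> XD0 Ib"
  shows "qf z = integral\<^sup>L M (\<lambda>x. (\<Lambda> x *v gradD z x) \<bullet> gradD z x)"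
  unfolding I2_quad[OF z z] qf_def by (simp add: sum.cartesian_product case_prod_beta)

lemma qf_ge:
  assumes z: "z \<in> XD0 Ib"
  shows "qf z \<ge> lo * integral\<^sup>L M (\<lambda>x. (norm (gradD z x))\<^sup>2)"
proof -
  have i2: "integrable M (\<lambda>x. (norm (gradD z x))\<^sup>2)" using grad_L2[OF z] by (simp add: L2_def)
  have "lo * integral\<^sup>L M (\<lambda>x. (norm (gradD z x))\<^sup>2) = integral\<^sup>L M (\<lambda>x. lo * (norm (gradD z x))\<^sup>2)"
    by simp
  also have "\<dots> \<le> integral\<^sup>L M (\<lambda>x. (\<Lambda> x *v gradD z x) \<bullet> gradD z x)"
  proof (rule integral_mono_AE)
    show "integrable M (\<lambda>x. lo * (norm (gradD z x))\<^sup>2)" using i2 by simp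
    show "integrable M (\<lambda>x. (\<Lambda> x *v gradD z x) \<bullet> gradD z x)"
      by (rule L2_inner[OF L2_\<Lambda>[OF grad_L2[OF z]] grad_L2[OF z]])
    show "AE x in M. lo * (norm (gradD z x))\<^sup>2 \<le> (\<Lambda> x *v gradD z x) \<bullet> gradD z x"
      using \<Lambda>_coer by eventually_elim (simp add: power2_norm_eq_inner)
  qed
  finally show ?thesis by (simp add: qf_int[OF z])
qed

lemma qf_nonneg: "z \<in> XD0 Ib \<Longrightarrow> qf z \<ge> 0"
  using qf_ge[of z] lo by (smt (verit) integral_nonneg_AE mult_nonneg_nonneg zero_le_power2 AE_I2)

lemma qf_pos:
  assumes z: "z \<in> XD0 Ib" and nz: "z \<noteq> (\<lambda>i. 0)"
  shows "qf z > 0"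
proof (rule ccontr)
  assume "\<not> qf z > 0"
  then have "lo * integral\<^sup>L M (\<lambda>x. (norm (gradD z x))\<^sup>2) \<le> 0" using qf_ge[OF z] by linarith
  moreover have "integral\<^sup>L M (\<lambda>x. (norm (gradD z x))\<^sup>2) \<ge> 0" by (rule integral_nonneg_AE) simp
  ultimately have "integral\<^sup>L M (\<lambda>x. (norm (gradD z x))\<^sup>2) = 0" using lo
    by (simp add: mult_le_0_iff)
  then show False using grad_norm[OF z] nz by blast
qed

end

lemma coer_est:
  fixes y :: "real^'i::finite" and J :: "'i set" and Z a m bt b :: "'i \<Rightarrow> real" and A :: "'i \<Rightarrow> 'i \<Rightarrow> real"
  assumes ya: "\<And>i. y$i = Z i + a i" and a2: "\<And>i. \<bar>a i\<bar> \<le> 2"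
    and mb: "\<And>i. i \<in> J \<Longrightarrow> m i * bt i * y$i \<ge> 0"
    and q: "(\<Sum>j\<in>J. \<Sum>i\<in>J. Z j * Z i * A j i) \<ge> c * (\<Sum>i\<in>J. (Z i)\<^sup>2)" and c: "c > 0"
  shows "(\<Sum>i\<in>UNIV. (if i \<in> J then m i * bt i + (\<Sum>j\<in>J. A j i * Z j) - b i else y$i) * y$i)
     \<ge> min c 1 * (norm y)\<^sup>2 - (4*c*card J + 2*(\<Sum>i\<in>J. \<Sum>j\<in>J. \<bar>A j i\<bar>) + (\<Sum>i\<in>J. \<bar>b i\<bar>)) * norm y
        - 4*(\<Sum>i\<in>J. \<Sum>j\<in>J. \<bar>A j i\<bar>)"
proof -
  define N where "N = norm y"
  have yN: "\<bar>y$i\<bar> \<le> N" for i unfolding N_def by (rule component_le_norm_cart)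
  have N0: "N \<ge> 0" unfolding N_def by simp
  define SA where "SA = (\<Sum>i\<in>J. \<Sum>j\<in>J. \<bar>A j i\<bar>)"
  define SB where "SB = (\<Sum>i\<in>J. \<bar>b i\<bar>)"
  define SJ where "SJ = (\<Sum>i\<in>J. (y$i)\<^sup>2)"
  define SO where "SO = (\<Sum>i\<in>UNIV - J. (y$i)\<^sup>2)"
  define SZ where "SZ = (\<Sum>i\<in>J. (Z i)\<^sup>2)"
  define Q where "Q = (\<Sum>j\<in>J. \<Sum>i\<in>J. Z j * Z i * A j i)"
  define Smb where "Smb = (\<Sum>i\<in>J. m i * bt i * y$i)"
  define SAZa where "SAZa = (\<Sum>i\<in>J. \<Sum>j\<in>J. A j i * Z j * a i)"
  define Sby where "Sby = (\<Sum>i\<in>J. b i * y$i)"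
  define n where "n = real (card J)"
  have fJ: "finite J" by simp
  have F1: "(\<Sum>i\<in>UNIV. (if i \<in> J then m i * bt i + (\<Sum>j\<in>J. A j i * Z j) - b i else y$i) * y$i)
      = Smb + (Q + SAZa) - Sby + SO"
  proof -
    have "(\<Sum>i\<in>UNIV. (if i \<in> J then m i * bt i + (\<Sum>j\<in>J. A j i * Z j) - b i else y$i) * y$i)
       = (\<Sum>i\<in>UNIV - J. (if i \<in> J then m i * bt i + (\<Sum>j\<in>J. A j i * Z j) - b i else y$i) * y$i)
         + (\<Sum>i\<in>J. (if i \<in> J then m i * bt i + (\<Sum>j\<in>J. A j i * Z j) - b i else y$i) * y$i)"
      by (rule sum.subset_diff) auto
    also have "(\<Sum>i\<in>UNIV - J. (if i \<in> J then m i * bt i + (\<Sum>j\<in>J. A j i * Z j) - b i else y$i) * y$i) = SO"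
      unfolding SO_def by (rule sum.cong) (auto simp: power2_eq_square)
    also have "(\<Sum>i\<in>J. (if i \<in> J then m i * bt i + (\<Sum>j\<in>J. A j i * Z j) - b i else y$i) * y$i)
       = (\<Sum>i\<in>J. m i * bt i * y$i + (\<Sum>j\<in>J. A j i * Z j * Z i) + (\<Sum>j\<in>J. A j i * Z j * a i) - b i * y$i)"
      by (rule sum.cong) (auto simp: ya algebra_simps sum_distrib_left sum.distrib)
    also have "\<dots> = Smb + ((\<Sum>i\<in>J. \<Sum>j\<in>J. A j i * Z j * Z i) + SAZa) - Sby"
      unfolding Smb_def SAZa_def Sby_def by (simp add: sum.distrib sum_subtractf)
    also have "(\<Sum>i\<in>J. \<Sum>j\<in>J. A j i * Z j * Z i) = Q"
      unfolding Q_def by (subst sum.swap) (simp add: algebra_simps)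
    finally show ?thesis by simp
  qed
  have F3: "Q \<ge> c * SZ" using q unfolding Q_def SZ_def .
  have F4: "SZ \<ge> SJ - 4 * N * n"
  proof -
    have "(Z i)\<^sup>2 \<ge> (y$i)\<^sup>2 - 4 * N" for i
    proof -
      have "\<bar>y$i\<bar> * \<bar>a i\<bar> \<le> N * 2" by (rule mult_mono[OF yN a2]) (use N0 in auto)
      moreover have "(Z i)\<^sup>2 = (y$i)\<^sup>2 - 2 * (y$i * a i) + (a i)\<^sup>2"
        using ya[of i] by (simp add: power2_eq_square algebra_simps)
      moreover have "y$i * a i \<le> \<bar>y$i\<bar> * \<bar>a i\<bar>" by (metis abs_ge_self abs_mult)
      moreover have "(a i)\<^sup>2 \<ge> 0" by simp
      ultimately show ?thesis by linarith
    qed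
    then have "SZ \<ge> (\<Sum>i\<in>J. (y$i)\<^sup>2 - 4 * N)" unfolding SZ_def by (intro sum_mono) auto
    then show ?thesis by (simp add: SJ_def n_def sum_subtractf algebra_simps)
  qed
  have F4c: "c * SZ \<ge> c * SJ - 4 * c * N * n"
    using mult_left_mono[OF F4, of c] c by (simp add: algebra_simps)
  have F5: "SAZa \<ge> - (SA * (2 * N + 4))"
  proof -
    have t: "A j i * Z j * a i \<ge> - (\<bar>A j i\<bar> * (2 * N + 4))" for i j
    proof -
      have Zb: "\<bar>Z j\<bar> \<le> N + 2" using ya[of j] yN[of j] a2[of j] by linarith
      have "\<bar>A j i * Z j * a i\<bar> = \<bar>A j i\<bar> * (\<bar>Z j\<bar> * \<bar>a i\<bar>)" by (simp add: abs_mult)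
      also have "\<dots> \<le> \<bar>A j i\<bar> * ((N + 2) * 2)"
        by (intro mult_left_mono mult_mono Zb a2) (use N0 in auto)
      finally show ?thesis by (simp add: algebra_simps)
    qed
    have "SAZa \<ge> (\<Sum>i\<in>J. \<Sum>j\<in>J. - (\<bar>A j i\<bar> * (2 * N + 4)))"
      unfolding SAZa_def by (intro sum_mono t)
    then show ?thesis by (simp add: SA_def sum_negf sum_distrib_right)
  qed
  have F6: "Sby \<le> SB * N"
  proof -
    have "b i * y$i \<le> \<bar>b i\<bar> * N" for i
    proof -
      have "b i * y$i \<le> \<bar>b i\<bar> * \<bar>y$i\<bar>" by (metis abs_ge_self abs_mult)
      also have "\<dots> \<le> \<bar>b i\<bar> * N" by (rule mult_left_mono[OF yN]) simp
      finally show ?thesis .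
    qed
    then show ?thesis unfolding Sby_def SB_def by (simp add: sum_mono sum_distrib_right)
  qed
  have F7: "Smb \<ge> 0" unfolding Smb_def by (rule sum_nonneg) (use mb in auto)
  have F8: "N\<^sup>2 = SJ + SO"
  proof -
    have "N\<^sup>2 = (\<Sum>i\<in>UNIV. (y$i)\<^sup>2)"
      unfolding N_def power2_norm_eq_inner by (simp add: inner_vec_def power2_eq_square)
    also have "\<dots> = SO + SJ" unfolding SO_def SJ_def by (rule sum.subset_diff) auto
    finally show ?thesis by simp
  qed
  have F9: "c * SJ + SO \<ge> min c 1 * (SJ + SO)"
  proof -
    have "SJ \<ge> 0" "SO \<ge> 0" unfolding SJ_def SO_def by (auto intro: sum_nonneg)
    then have "min c 1 * SJ \<le> c * SJ" "min c 1 * SO \<le> 1 * SO"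
      by (intro mult_right_mono; simp)+
    then show ?thesis by (simp add: algebra_simps)
  qed
  show ?thesis
    unfolding F1 N_def[symmetric] SA_def[symmetric] SB_def[symmetric] n_def[symmetric] F8
    using F3 F4c F5 F6 F7 F9 by (simp add: algebra_simps)
qed

context gsl begin

lemma qf_restrict: "qf w = qf (\<lambda>i. if i \<in> Ib then 0 else w i)"
  unfolding qf_def by (intro sum.cong refl) auto

lemma qf_hom: "qf (\<lambda>i. t * z i) = t\<^sup>2 * qf z"
  unfolding qf_def by (simp add: sum_distrib_left power2_eq_square algebra_simps)

lemma qf_coer: "\<exists>c>0. \<forall>w. qf w \<ge> c * (\<Sum>i\<in>J. (w i)\<^sup>2)"
proof (cases "J = {}")
  case True
  then show ?thesis by (intro exI[of _ 1]) (simp only: qf_def True, simp)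
next
  case False
  then obtain k where k: "k \<in> J" by blast
  define S where "S = sphere (0::real^'i) 1 \<inter> (\<Inter>i\<in>Ib. {y. y$i = 0})"
  have cS: "compact S" unfolding S_def
    by (intro compact_Int_closed compact_sphere closed_INT ballI closed_Collect_eq continuous_on_component continuous_on_id continuous_on_const)
  have nS: "axis k 1 \<in> S" using k by (auto simp: S_def) (auto simp: axis_def)
  have cont: "continuous_on S (\<lambda>y. qf (\<lambda>i. y$i))"
    unfolding qf_def by (intro continuous_intros)
  obtain y0 where y0: "y0 \<in> S" "\<And>y. y \<in> S \<Longrightarrow> qf (\<lambda>i. y0$i) \<le> qf (\<lambda>i. y$i)"
    using continuous_attains_inf[OF cS _ cont] nS by blast
  define c where "c = qf (\<lambda>i. y0$i)"
  have y0X: "(\<lambda>i. y0$i) \<in> XD0 Ib" using y0(1) by (auto simp: S_def XD0_def)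
  have y0nz: "(\<lambda>i. y0$i) \<noteq> (\<lambda>i. 0)"
  proof
    assume "(\<lambda>i. y0$i) = (\<lambda>i. 0)"
    then have "y0 = 0" by (simp add: vec_eq_iff fun_eq_iff)
    then show False using y0(1) by (simp add: S_def)
  qed
  have c: "c > 0" unfolding c_def by (rule qf_pos[OF y0X y0nz])
  have "qf w \<ge> c * (\<Sum>i\<in>J. (w i)\<^sup>2)" for w
  proof -
    define z where "z = (\<lambda>i. if i \<in> Ib then 0 else w i)"
    have zX: "z \<in> XD0 Ib" by (simp add: z_def XD0_def)
    have qz: "qf w = qf z" unfolding z_def by (rule qf_restrict)
    define s where "s = (\<Sum>i\<in>J. (w i)\<^sup>2)"
    have sz: "(\<Sum>i\<in>UNIV. (z i)\<^sup>2) = s"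
    proof -
      have "(\<Sum>i\<in>UNIV. (z i)\<^sup>2) = (\<Sum>i\<in>J. (z i)\<^sup>2)"
        by (rule sum.mono_neutral_right) (auto simp: z_def)
      then show ?thesis by (simp add: s_def z_def)
    qed
    have s0: "s \<ge> 0" unfolding s_def by (auto intro: sum_nonneg)
    show ?thesis
    proof (cases "s = 0")
      case True
      then show ?thesis using qf_nonneg[OF zX] qz by (simp add: s_def)
    next
      case False
      then have sp: "s > 0" using s0 by simp
      define t where "t = 1 / sqrt s"
      have tp: "t > 0" using sp by (simp add: t_def)
      have t2: "t\<^sup>2 * s = 1" using sp by (simp add: t_def power_divide)
      define y where "y = (\<chi> i. t * z i)"
      have "y \<bullet> y = t\<^sup>2 * (\<Sum>i\<in>UNIV. (z i)\<^sup>2)"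
        by (simp add: y_def inner_vec_def sum_distrib_left power2_eq_square algebra_simps)
      then have "y \<bullet> y = 1" using sz t2 by simp
      then have "norm y = 1" by (simp add: norm_eq_sqrt_inner)
      then have yS: "y \<in> S" by (auto simp: S_def y_def z_def)
      have "c \<le> qf (\<lambda>i. y$i)" unfolding c_def by (rule y0(2)[OF yS])
      also have "qf (\<lambda>i. y$i) = t\<^sup>2 * qf z" by (simp add: y_def qf_hom)
      finally have "c * s \<le> t\<^sup>2 * qf z * s" using sp by simp
      also have "\<dots> = qf z" using t2 by (simp add: algebra_simps)
      finally show ?thesis using qz by (simp add: s_def)
    qed
  qed
  then show ?thesis using c by blast
qed

end

context gsl begin

definition H :: "real \<Rightarrow> real" where "H s = \<zeta> s + arctan s"

lemma H_strict: "strict_mono H"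
  unfolding strict_mono_def H_def
proof (intro allI impI)
  fix s t :: real assume "s < t"
  then have "\<zeta> s \<le> \<zeta> t" "arctan s < arctan t" using \<zeta>_mono by (auto simp: monoD arctan_less_iff)
  then show "\<zeta> s + arctan s < \<zeta> t + arctan t" by simp
qed

lemma H_isCont: "isCont H x"
proof -
  have "isCont \<zeta> x" using \<zeta>_cont continuous_on_eq_continuous_at[OF open_UNIV] by blast
  then show ?thesis unfolding H_def by (intro isCont_add isCont_arctan)
qed

lemma H0: "H 0 = 0" by (simp add: H_def \<zeta>0)

lemma arctan_abs2: "\<bar>arctan s\<bar> \<le> 2"
  using arctan_bounded[of s] pi_less_4 by linarith

lemma H_ge: "s \<ge> 0 \<Longrightarrow> H s \<ge> M0 * s - M1 - 2"
proof -
  assume s: "s \<ge> 0"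
  then have "\<zeta> s \<ge> 0" using \<zeta>_mono \<zeta>0 by (metis monoD)
  then have "\<zeta> s \<ge> M0 * s - M1" using \<zeta>_growth[of s] s by simp
  then show ?thesis unfolding H_def using arctan_abs2[of s] by linarith
qed

lemma H_le: "s \<le> 0 \<Longrightarrow> H s \<le> M0 * s + M1 + 2"
proof -
  assume s: "s \<le> 0"
  then have "\<zeta> s \<le> 0" using \<zeta>_mono \<zeta>0 by (metis monoD)
  then have "\<zeta> s \<le> M0 * s + M1" using \<zeta>_growth[of s] s by simp
  then show ?thesis unfolding H_def using arctan_abs2[of s] by linarith
qed

lemma H_surj: "surj H"
proof -
  have "\<exists>s. H s = t" for t
  proof (cases "t \<ge> 0")
    case True
    define s1 where "s1 = max 0 ((t + M1 + 2) / M0)"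
    have s1: "s1 \<ge> 0" "M0 * s1 \<ge> t + M1 + 2" using M0 by (auto simp: s1_def max_def field_simps)
    have "H s1 \<ge> t" using H_ge[OF s1(1)] s1(2) by linarith
    then obtain s where "0 \<le> s \<and> s \<le> s1 \<and> H s = t"
      using IVT[of H 0 t s1] True s1(1) H0 H_isCont by auto
    then show ?thesis by blast
  next
    case False
    define s2 where "s2 = min 0 ((t - M1 - 2) / M0)"
    have s2: "s2 \<le> 0" "M0 * s2 \<le> t - M1 - 2" using M0 by (auto simp: s2_def min_def field_simps)
    have "H s2 \<le> t" using H_le[OF s2(1)] s2(2) by linarith
    then obtain s where "s2 \<le> s \<and> s \<le> 0 \<and> H s = t"
      using IVT[of H s2 t 0] False s2(1) H0 H_isCont by auto
    then show ?thesis by blast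
  qed
  then show ?thesis by (metis surjI)
qed

definition Hi :: "real \<Rightarrow> real" where "Hi = inv H"

lemma H_Hi: "H (Hi t) = t" unfolding Hi_def by (rule surj_f_inv_f[OF H_surj])

lemma Hi_H: "Hi (H s) = s" unfolding Hi_def by (rule inv_f_f[OF strict_mono_imp_inj_on[OF H_strict]])

lemma Hi0: "Hi 0 = 0" using Hi_H[of 0] H0 by simp

lemma Hi_cont: "continuous_on UNIV Hi"
proof (rule continuous_at_imp_continuous_on, rule ballI)
  fix t :: real
  have "isCont Hi (H (Hi t))"
    by (rule isCont_inverse_function[where d=1]) (auto simp: Hi_H H_isCont)
  then show "isCont Hi t" by (simp add: H_Hi)
qed

lemma beta_H_sign: "\<beta> s * H s \<ge> 0"
proof (cases "s \<ge> 0")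
  case True
  then have "\<beta> s \<ge> 0" "H s \<ge> 0" using \<beta>_mono \<beta>0 H0 strict_mono_less_eq[OF H_strict, of 0 s]
    by (auto simp: monoD) (metis monoD)
  then show ?thesis by simp
next
  case False
  then have "\<beta> s \<le> 0" "H s \<le> 0" using \<beta>_mono \<beta>0 H0 strict_mono_less_eq[OF H_strict, of s 0]
    by (auto simp: monoD) (metis monoD nle_le)
  then show ?thesis by (simp add: mult_nonpos_nonpos)
qed

end

context gsl begin

definition Gv :: "real^'i \<Rightarrow> real^'i" where
  "Gv y = (\<chi> i. if i \<in> J then mm i * \<beta> (Hi (y$i)) + (\<Sum>j\<in>J. AA j i * \<zeta> (Hi (y$j))) - bb i else y$i)"

lemma Gv_cont: "continuous_on S Gv"
proof -
  have cH: "continuous_on S (\<lambda>y::real^'i. Hi (y$i))" for i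
    by (rule continuous_on_compose2[OF Hi_cont continuous_on_component[OF continuous_on_id]]) auto
  have cb: "continuous_on S (\<lambda>y::real^'i. \<beta> (Hi (y$i)))" for i
    by (rule continuous_on_compose2[OF \<beta>_cont cH]) auto
  have cz: "continuous_on S (\<lambda>y::real^'i. \<zeta> (Hi (y$i)))" for i
    by (rule continuous_on_compose2[OF \<zeta>_cont cH]) auto
  show ?thesis unfolding Gv_def
  proof (rule continuous_on_vec_lambda)
    fix i
    show "continuous_on S (\<lambda>y. if i \<in> J then mm i * \<beta> (Hi (y$i)) + (\<Sum>j\<in>J. AA j i * \<zeta> (Hi (y$j))) - bb i else y$i)"
      by (cases "i \<in> J") (simp_all add: continuous_on_component continuous_on_id, intro continuous_intros cb cz)
  qed
qed

lemma Gv_zero: "\<exists>y. Gv y = 0"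
proof -
  obtain c where c: "c > 0" "\<And>w. qf w \<ge> c * (\<Sum>i\<in>J. (w i)\<^sup>2)" using qf_coer by blast
  define SA where "SA = (\<Sum>i\<in>J. \<Sum>j\<in>J. \<bar>AA j i\<bar>)"
  define SB where "SB = (\<Sum>i\<in>J. \<bar>bb i\<bar>)"
  define K1 where "K1 = 4*c*card J + 2*SA + SB"
  define K2 where "K2 = 4*SA"
  define c' where "c' = min c 1"
  have SA0: "SA \<ge> 0" "SB \<ge> 0" unfolding SA_def SB_def by (auto intro!: sum_nonneg)
  have K0: "K1 \<ge> 0" "K2 \<ge> 0" using SA0 c by (auto simp: K1_def K2_def)
  have c'0: "c' > 0" using c by (simp add: c'_def)
  define R where "R = (K1 + K2) / c' + 1"
  have R1: "R \<ge> 1" using K0 c'0 by (simp add: R_def)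
  have cR: "c' * R = K1 + K2 + c'" using c'0 by (simp add: R_def field_simps)
  have pos: "Gv y \<bullet> y > 0" if ny: "norm y = R" for y
  proof -
    have "Gv y \<bullet> y = (\<Sum>i\<in>UNIV. (if i \<in> J then mm i * \<beta> (Hi (y$i)) + (\<Sum>j\<in>J. AA j i * \<zeta> (Hi (y$j))) - bb i else y$i) * y$i)"
      by (simp add: Gv_def inner_vec_def)
    also have "\<dots> \<ge> c' * (norm y)\<^sup>2 - K1 * norm y - K2"
      unfolding c'_def K1_def K2_def SA_def SB_def
    proof (rule coer_est)
      show "y$i = \<zeta> (Hi (y$i)) + arctan (Hi (y$i))" for i using H_Hi[of "y$i"] by (simp add: H_def)
      show "\<bar>arctan (Hi (y$i))\<bar> \<le> 2" for i by (rule arctan_abs2)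
      show "mm i * \<beta> (Hi (y$i)) * y$i \<ge> 0" for i
        using mult_nonneg_nonneg[OF mm_nonneg beta_H_sign[of "Hi (y$i)"]] by (simp add: H_Hi mult.assoc)
      show "(\<Sum>j\<in>J. \<Sum>i\<in>J. \<zeta> (Hi (y$j)) * \<zeta> (Hi (y$i)) * AA j i) \<ge> c * (\<Sum>i\<in>J. (\<zeta> (Hi (y$i)))\<^sup>2)"
        using c(2)[of "\<lambda>i. \<zeta> (Hi (y$i))"] by (simp add: qf_def)
    qed (rule c(1))
    finally have "Gv y \<bullet> y \<ge> c' * R\<^sup>2 - K1 * R - K2" using ny by simp
    moreover have "c' * R\<^sup>2 = R * K1 + R * K2 + R * c'" using cR by (simp add: power2_eq_square algebra_simps)
    moreover have "(R - 1) * K2 \<ge> 0" using R1 K0 by simp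
    moreover have "R * c' > 0" using R1 c'0 by simp
    ultimately show ?thesis by (simp add: algebra_simps)
  qed
  have "\<exists>y\<in>cball 0 R. Gv y = 0"
    by (rule acute_zero) (use R1 pos Gv_cont in auto)
  then show ?thesis by blast
qed

theorem existence: "\<exists>u. is_GS_solution \<Omega> Ib U gradD \<beta> \<zeta> \<Lambda> Qf F u"
proof -
  obtain y where y: "Gv y = 0" using Gv_zero by blast
  define u where "u = (\<lambda>i. Hi (y$i))"
  have comp: "Gv y $ i = 0" for i using y by simp
  have uX: "u \<in> XD0 Ib"
  proof (unfold XD0_def, intro CollectI ballI)
    fix i assume "i \<in> Ib"
    then have "y$i = 0" using comp[of i] by (simp add: Gv_def)
    then show "u i = 0" by (simp add: u_def Hi0)
  qed
  have Re: "Res u (e i) = 0" if i: "i \<in> J" for i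
    using comp[of i] i unfolding Res_e[OF uX i] by (simp add: Gv_def u_def)
  have "Res u v = 0" if v: "v \<in> XD0 Ib" for v
    using Res_lin[OF uX v] Re by simp
  then show ?thesis using uX by (auto simp: GS_iff)
qed

theorem uniqueness:
  assumes s1: "is_GS_solution \<Omega> Ib U gradD \<beta> \<zeta> \<Lambda> Qf F u1"
    and s2: "is_GS_solution \<Omega> Ib U gradD \<beta> \<zeta> \<Lambda> Qf F u2"
  shows "compw \<zeta> u1 = compw \<zeta> u2 \<and> (AE x in M. PiD U u1 x = PiD U u2 x)"
proof -
  have u1: "u1 \<in> XD0 Ib" "\<And>v. v \<in> XD0 Ib \<Longrightarrow> Res u1 v = 0" using s1 by (auto simp: GS_iff)
  have u2: "u2 \<in> XD0 Ib" "\<And>v. v \<in> XD0 Ib \<Longrightarrow> Res u2 v = 0" using s2 by (auto simp: GS_iff)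
  have E1: "mm i * \<beta> (u1 i) + (\<Sum>j\<in>J. AA j i * \<zeta> (u1 j)) - bb i = 0" if "i \<in> J" for i
    using u1(2)[OF e_XD0[OF that]] Res_e[OF u1(1) that] by simp
  have E2: "mm i * \<beta> (u2 i) + (\<Sum>j\<in>J. AA j i * \<zeta> (u2 j)) - bb i = 0" if "i \<in> J" for i
    using u2(2)[OF e_XD0[OF that]] Res_e[OF u2(1) that] by simp
  define d where "d = (\<lambda>i. \<zeta> (u1 i) - \<zeta> (u2 i))"
  have dX: "d \<in> XD0 Ib" using u1(1) u2(1) by (auto simp: d_def XD0_def \<zeta>0)
  have D: "mm i * (\<beta> (u1 i) - \<beta> (u2 i)) + (\<Sum>j\<in>J. AA j i * d j) = 0" if "i \<in> J" for i
    using E1[OF that] E2[OF that] by (simp add: d_def algebra_simps sum_subtractf)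
  have "(\<Sum>i\<in>J. (mm i * (\<beta> (u1 i) - \<beta> (u2 i)) + (\<Sum>j\<in>J. AA j i * d j)) * d i) = 0"
    using D by simp
  moreover have "(\<Sum>i\<in>J. (mm i * (\<beta> (u1 i) - \<beta> (u2 i)) + (\<Sum>j\<in>J. AA j i * d j)) * d i)
     = (\<Sum>i\<in>J. mm i * (\<beta> (u1 i) - \<beta> (u2 i)) * d i) + (\<Sum>i\<in>J. \<Sum>j\<in>J. AA j i * d j * d i)"
    by (simp add: distrib_right sum.distrib sum_distrib_right)
  moreover have "(\<Sum>i\<in>J. \<Sum>j\<in>J. AA j i * d j * d i) = qf d"
    unfolding qf_def by (subst sum.swap) (simp add: algebra_simps)
  ultimately have sum0: "(\<Sum>i\<in>J. mm i * (\<beta> (u1 i) - \<beta> (u2 i)) * d i) + qf d = 0"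
    by simp
  have t0: "(\<Sum>i\<in>J. mm i * (\<beta> (u1 i) - \<beta> (u2 i)) * d i) \<ge> 0"
  proof (rule sum_nonneg)
    fix i
    have "(\<beta> (u1 i) - \<beta> (u2 i)) * (\<zeta> (u1 i) - \<zeta> (u2 i)) \<ge> 0"
    proof (cases "u1 i \<le> u2 i")
      case True
      then show ?thesis using \<beta>_mono \<zeta>_mono by (auto simp: monoD intro!: mult_nonpos_nonpos)
    next
      case False
      then show ?thesis using \<beta>_mono \<zeta>_mono by (auto simp: monoD intro!: mult_nonneg_nonneg)
    qed
    then show "mm i * (\<beta> (u1 i) - \<beta> (u2 i)) * d i \<ge> 0"
      using mm_nonneg[of i] by (simp add: d_def mult.assoc)
  qed
  have "qf d \<le> 0" using sum0 t0 by linarith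
  then have d0: "d = (\<lambda>i. 0)" using qf_pos[OF dX] by fastforce
  have zeq: "\<zeta> (u1 i) = \<zeta> (u2 i)" for i using d0 by (simp add: d_def fun_eq_iff)
  then have C1: "compw \<zeta> u1 = compw \<zeta> u2" by (simp add: compw_def fun_eq_iff)
  have meq: "mm i * \<beta> (u1 i) = mm i * \<beta> (u2 i)" if "i \<in> J" for i
  proof -
    have "(\<Sum>j\<in>J. AA j i * \<zeta> (u1 j)) = (\<Sum>j\<in>J. AA j i * \<zeta> (u2 j))" using zeq by simp
    then show ?thesis using E1[OF that] E2[OF that] by linarith
  qed
  have ueq: "u1 i = u2 i" if "i \<in> J" "mm i \<noteq> 0" for i
  proof -
    have "\<beta> (u1 i) = \<beta> (u2 i)" using meq[OF that(1)] that(2) by simp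
    then have "\<beta> (u1 i) + \<zeta> (u1 i) = \<beta> (u2 i) + \<zeta> (u2 i)" using zeq by simp
    then show ?thesis using strict_mono_imp_inj_on[OF \<beta>\<zeta>_strict] by (auto dest: injD)
  qed
  have null: "AE x in M. x \<notin> U i" if "i \<in> J" "mm i = 0" for i
  proof -
    have "AE x in M. PiD U (e i) x = 0"
      using that(2) integral_nonneg_eq_0_iff_AE[OF ind_int[OF that(1)]] by (simp add: mm_def Pi_e_ind)
    then show ?thesis by eventually_elim (simp add: Pi_e_ind indicator_def split: if_splits)
  qed
  have "AE x in M. \<forall>i\<in>{i\<in>J. mm i = 0}. x \<notin> U i"
    by (rule eventually_ball_finite) (use null in auto)
  then have "AE x in M. PiD U u1 x = PiD U u2 x"
    using AE_space
  proof eventually_elim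
    case (elim x)
    then have "x \<in> \<Omega>" by simp
    then obtain k where k: "x \<in> U k" using U_cover by blast
    show ?case
    proof (cases "k \<in> Ib")
      case True
      then show ?thesis using k u1(1) u2(1) by (simp add: Pi_e XD0_def)
    next
      case False
      then have "mm k \<noteq> 0" using elim k by auto
      then show ?thesis using k False ueq by (simp add: Pi_e)
    qed
  qed
  then show ?thesis using C1 by simp
qed

end

theorem mainTheorem2:
  fixes \<Omega> :: "(real^'n) set"
    and \<zeta> \<beta> :: "real \<Rightarrow> real"
    and M0 M1 K0 K1 lam_lo lam_hi :: real
    and \<Lambda> :: "real^'n \<Rightarrow> real^'n^'n"
    and f :: "real^'n \<Rightarrow> real"
    and F :: "real^'n \<Rightarrow> real^'n"
    and Ib :: "'i::finite set"
    and U :: "'i \<Rightarrow> (real^'n) set"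
    and gradD :: "('i \<Rightarrow> real) \<Rightarrow> real^'n \<Rightarrow> real^'n"
    and Q :: "(real^'n \<Rightarrow> real) \<Rightarrow> (real^'n \<Rightarrow> real)"
  assumes \<Omega>_open: "open \<Omega>" and \<Omega>_bounded: "bounded \<Omega>" and \<Omega>_conn: "connected \<Omega>"
    and \<zeta>_cont: "continuous_on UNIV \<zeta>" and \<zeta>_mono: "mono \<zeta>" and \<zeta>0: "\<zeta> 0 = 0"
    and M_pos: "M0 > 0" "M1 > 0" and \<zeta>_growth: "\<And>s. \<bar>\<zeta> s\<bar> \<ge> M0 * \<bar>s\<bar> - M1"
    and \<beta>_cont: "continuous_on UNIV \<beta>" and \<beta>_mono: "mono \<beta>" and \<beta>0: "\<beta> 0 = 0"
    and K_pos: "K0 > 0" "K1 > 0" and \<beta>_growth: "\<And>s. \<bar>\<beta> s\<bar> \<le> K0 * \<bar>s\<bar> + K1"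
    and \<beta>\<zeta>_strict: "strict_mono (\<lambda>s. \<beta> s + \<zeta> s)"
    and \<Lambda>_meas: "\<Lambda> \<in> borel_measurable (lebesgue_on \<Omega>)"
    and lam_pos: "lam_hi \<ge> lam_lo" "lam_lo > 0"
    and \<Lambda>_sym: "AE x in lebesgue_on \<Omega>. transpose (\<Lambda> x) = \<Lambda> x"
    and \<Lambda>_eig: "AE x in lebesgue_on \<Omega>. \<forall>c. is_eigenvalue (\<Lambda> x) c \<longrightarrow> lam_lo \<le> c \<and> c \<le> lam_hi"
    and f_L2: "L2 \<Omega> f" and F_L2: "L2 \<Omega> F"
    and U_disj: "\<And>i j. i \<noteq> j \<Longrightarrow> U i \<inter> U j = {}"
    and U_cover: "(\<Union>i. U i) = \<Omega>"
    and Pi_L2: "\<And>v. v \<in> XD0 Ib \<Longrightarrow> L2 \<Omega> (PiD U v)"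
    and grad_L2: "\<And>v. v \<in> XD0 Ib \<Longrightarrow> L2 \<Omega> (gradD v)"
    and grad_lin: "\<And>a b v w. v \<in> XD0 Ib \<Longrightarrow> w \<in> XD0 Ib \<Longrightarrow>
        AE x in lebesgue_on \<Omega>. gradD (\<lambda>i. a * v i + b * w i) x = a *\<^sub>R gradD v x + b *\<^sub>R gradD w x"
    and grad_norm: "\<And>v. v \<in> XD0 Ib \<Longrightarrow>
        integral\<^sup>L (lebesgue_on \<Omega>) (\<lambda>x. (norm (gradD v x))\<^sup>2) = 0 \<Longrightarrow> v = (\<lambda>i. 0)"
    and Q_L2: "\<And>g. L2 \<Omega> g \<Longrightarrow> L2 \<Omega> (Q g)"
  shows "(\<exists>u. is_GS_solution \<Omega> Ib U gradD \<beta> \<zeta> \<Lambda> (Q f) F u)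
       \<and> (\<forall>u1 u2. is_GS_solution \<Omega> Ib U gradD \<beta> \<zeta> \<Lambda> (Q f) F u1
                 \<longrightarrow> is_GS_solution \<Omega> Ib U gradD \<beta> \<zeta> \<Lambda> (Q f) F u2
                 \<longrightarrow> compw \<zeta> u1 = compw \<zeta> u2
                    \<and> (AE x in lebesgue_on \<Omega>. PiD U u1 x = PiD U u2 x))"
proof -
  interpret g: gsl \<Omega> \<zeta> \<beta> M0 M1 lam_lo lam_hi \<Lambda> "Q f" F Ib U gradD
    by (unfold_locales) (use assms Q_L2[OF f_L2] in auto)
  show ?thesis using g.existence g.uniqueness by blast
qed

end
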